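(* Let $p\in\mathbb{R}$ and $\gamma>0$. Let $z=(v,m,\sigma,e)\in Z$ satisfy $m\ne(e+p)v$, $2e-|v|^2>0$, $M(z)=0$, $e<\gamma$ and \[\left|\frac{(m-(e+p)v)(2\gamma-|v|^2)}{(\gamma-e)(2e-|v|^2)}-v\right|\le\sqrt{2\gamma}.\] Then $z\in K_\gamma^{\Lambda,1}$.
   Context: $\mathcal S_0^{2\times2}$ is the space of traceless symmetric $2\times2$ matrices, $Z:=\mathbb{R}^2\times\mathbb{R}^2\times\mathcal S_0^{2\times2}\times\mathbb{R}$, $K_\gamma:=\{z\in Z: v\otimes v-\sigma=e\,\mathrm{Id},\ m=(e+p)v,\ e\le\gamma\}$. The wave cone is $\Lambda=\{\bar z=(\bar v,\bar m,\bar\sigma,\bar e)\in Z:\ (\bar v,\bar e)\neq0\text{ and there is }0\ne(\xi,c)\in\mathbb{R}^2\times\mathbb{R}\text{ with }(\bar\sigma+\bar e\,\mathrm{Id})\xi+c\bar v=0,\ \bar v\cdot\xi=0,\ \bar m\cdot\xi+c\bar e=0\}$. $K_\gamma^{\Lambda,1}:=K_\gamma\cup\{sz_1+(1-s)z_2: z_1,z_2\in K_\gamma,\ s\in[0,1],\ z_1-z_2\in\Lambda\}$. For $z$ with $m\ne(e+p)v$, $\eta(z):=\frac{m-(e+p)v}{|m-(e+p)v|}$ and $M(z):=v\otimes v-\sigma-e\,\mathrm{Id}+(2e-|v|^2)\eta(z)\otimes\eta(z)$. *)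

theory Defs
  imports "HOL-Analysis.Analysis"
begin

text \<open>A point z = (v, m, sigma, e) of Z = R^2 x R^2 x S_0^{2x2} x R.
  The ambient type is real^2 x real^2 x real^2^2 x real; membership in Z
  additionally requires sigma to be symmetric and traceless.\<close>

type_synonym zpt = "(real^2) \<times> (real^2) \<times> ((real^2)^2) \<times> real"

definition outer :: "real^2 \<Rightarrow> real^2 \<Rightarrow> real^2^2" where
  "outer a b = (\<chi> i j. a $ i * b $ j)"

definition Zset :: "zpt set" where
  "Zset = {(v, m, \<sigma>, e). transpose \<sigma> = \<sigma> \<and> trace \<sigma> = 0}"

definition Kgam :: "real \<Rightarrow> real \<Rightarrow> zpt set" where
  "Kgam p \<gamma> = {(v, m, \<sigma>, e) \<in> Zset.
      outer v v - \<sigma> = e *\<^sub>R mat 1 \<and> m = (e + p) *\<^sub>R v \<and> e \<le> \<gamma>}"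

definition wave_cone :: "zpt set" where
  "wave_cone = {(v, m, \<sigma>, e) \<in> Zset. (v, e) \<noteq> 0 \<and>
      (\<exists>\<xi>::real^2. \<exists>c::real. (\<xi>, c) \<noteq> 0 \<and>
         (\<sigma> + e *\<^sub>R mat 1) *v \<xi> + c *\<^sub>R v = 0 \<and>
         v \<bullet> \<xi> = 0 \<and> m \<bullet> \<xi> + c * e = 0)}"

definition KLam1 :: "real \<Rightarrow> real \<Rightarrow> zpt set" where
  "KLam1 p \<gamma> = Kgam p \<gamma> \<union>
     {s *\<^sub>R z1 + (1 - s) *\<^sub>R z2 | s z1 z2.
        z1 \<in> Kgam p \<gamma> \<and> z2 \<in> Kgam p \<gamma> \<and> s \<in> {0..1} \<and> z1 - z2 \<in> wave_cone}"

definition eta :: "real \<Rightarrow> zpt \<Rightarrow> real^2" where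
  "eta p z = (case z of (v, m, \<sigma>, e) \<Rightarrow>
      (1 / norm (m - (e + p) *\<^sub>R v)) *\<^sub>R (m - (e + p) *\<^sub>R v))"

definition Mmat :: "real \<Rightarrow> zpt \<Rightarrow> real^2^2" where
  "Mmat p z = (case z of (v, m, \<sigma>, e) \<Rightarrow>
      outer v v - \<sigma> - e *\<^sub>R mat 1 + (2 * e - (norm v)^2) *\<^sub>R outer (eta p z) (eta p z))"

end

theory Submission
  imports Defs
begin

definition kpt :: "real \<Rightarrow> real^2 \<Rightarrow> zpt" where
  "kpt p u = (u, (u \<bullet> u / 2 + p) *\<^sub>R u, outer u u - (u \<bullet> u / 2) *\<^sub>R mat 1, u \<bullet> u / 2)"

lemma inner2: "(x::real^2) \<bullet> y = x$1 * y$1 + x$2 * y$2"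
  by (simp add: inner_vec_def sum_2)

lemma kpt_in: "u \<bullet> u / 2 \<le> \<gamma> \<Longrightarrow> kpt p u \<in> Kgam p \<gamma>"
  unfolding kpt_def Kgam_def Zset_def
  by (auto simp: vec_eq_iff transpose_def outer_def mat_def trace_def sum_2 inner2 forall_2)

lemma wave_intro:
  assumes "(vb, mb, sb, eb) \<in> Zset" "(vb, eb) \<noteq> 0" "(\<xi>, c) \<noteq> 0"
    "(sb + eb *\<^sub>R mat 1) *v \<xi> + c *\<^sub>R vb = 0" "vb \<bullet> \<xi> = 0" "mb \<bullet> \<xi> + c * eb = 0"
  shows "(vb, mb, sb, eb) \<in> wave_cone"
  using assms unfolding wave_cone_def by blast

lemma kpt_wave:
  fixes v1 v2 \<eta> :: "real^2"
  assumes "v1 - v2 = t *\<^sub>R \<eta>" "\<eta> \<noteq> 0" "t \<noteq> 0"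
  shows "kpt p v1 - kpt p v2 \<in> wave_cone"
proof -
  define \<xi> :: "real^2" where "\<xi> = vector [- \<eta>$2, \<eta>$1]"
  define c where "c = - (v1 \<bullet> \<xi>)"
  have e1: "v1$1 = v2$1 + t * \<eta>$1" "v1$2 = v2$2 + t * \<eta>$2"
    using assms(1) by (auto simp: vec_eq_iff forall_2 algebra_simps)
  have xi0: "\<xi> \<noteq> 0" using assms(2) by (auto simp: \<xi>_def vec_eq_iff forall_2)
  have "\<eta>$1 \<noteq> 0 \<or> \<eta>$2 \<noteq> 0" using assms(2) by (auto simp: vec_eq_iff forall_2)
  then have vne: "v1 - v2 \<noteq> 0" using assms(1,3) by (auto simp: vec_eq_iff forall_2)
  have "(v1 - v2, (v1 \<bullet> v1 / 2 + p) *\<^sub>R v1 - (v2 \<bullet> v2 / 2 + p) *\<^sub>R v2,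
     outer v1 v1 - (v1 \<bullet> v1 / 2) *\<^sub>R mat 1 - (outer v2 v2 - (v2 \<bullet> v2 / 2) *\<^sub>R mat 1),
     v1 \<bullet> v1 / 2 - v2 \<bullet> v2 / 2) \<in> wave_cone"
  proof (rule wave_intro)
    show "(v1 - v2, (v1 \<bullet> v1 / 2 + p) *\<^sub>R v1 - (v2 \<bullet> v2 / 2 + p) *\<^sub>R v2,
     outer v1 v1 - (v1 \<bullet> v1 / 2) *\<^sub>R mat 1 - (outer v2 v2 - (v2 \<bullet> v2 / 2) *\<^sub>R mat 1),
     v1 \<bullet> v1 / 2 - v2 \<bullet> v2 / 2) \<in> Zset"
      unfolding Zset_def
      by (auto simp: vec_eq_iff transpose_def outer_def mat_def trace_def sum_2 inner2 forall_2 field_simps)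
    show "(v1 - v2, v1 \<bullet> v1 / 2 - v2 \<bullet> v2 / 2) \<noteq> 0" using vne by (simp add: zero_prod_def)
    show "(\<xi>, c) \<noteq> 0" using xi0 by (simp add: zero_prod_def)
    show "(outer v1 v1 - (v1 \<bullet> v1 / 2) *\<^sub>R mat 1 - (outer v2 v2 - (v2 \<bullet> v2 / 2) *\<^sub>R mat 1) +
           (v1 \<bullet> v1 / 2 - v2 \<bullet> v2 / 2) *\<^sub>R mat 1) *v \<xi> + c *\<^sub>R (v1 - v2) = 0"
      by (simp add: vec_eq_iff forall_2 matrix_vector_mult_def sum_2 outer_def mat_def c_def \<xi>_def inner2 e1 algebra_simps)
    show "(v1 - v2) \<bullet> \<xi> = 0"
      by (simp add: \<xi>_def inner2 e1 algebra_simps)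
    show "((v1 \<bullet> v1 / 2 + p) *\<^sub>R v1 - (v2 \<bullet> v2 / 2 + p) *\<^sub>R v2) \<bullet> \<xi> + c * (v1 \<bullet> v1 / 2 - v2 \<bullet> v2 / 2) = 0"
      by (simp add: \<xi>_def c_def inner2 e1 field_simps)
  qed
  then show ?thesis by (simp add: kpt_def)
qed

lemma outer_add_left: "outer (x + y) z = outer x z + outer y z"
  by (simp add: outer_def vec_eq_iff algebra_simps)
lemma outer_add_right: "outer z (x + y) = outer z x + outer z y"
  by (simp add: outer_def vec_eq_iff algebra_simps)
lemma outer_diff_left: "outer (x - y) z = outer x z - outer y z"
  by (simp add: outer_def vec_eq_iff algebra_simps)
lemma outer_diff_right: "outer z (x - y) = outer z x - outer z y"
  by (simp add: outer_def vec_eq_iff algebra_simps)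
lemma outer_scale_left: "outer (c *\<^sub>R x) z = c *\<^sub>R outer x z"
  by (simp add: outer_def vec_eq_iff algebra_simps)
lemma outer_scale_right: "outer z (c *\<^sub>R x) = c *\<^sub>R outer z x"
  by (simp add: outer_def vec_eq_iff algebra_simps)

lemmas outer_simps = outer_add_left outer_add_right outer_diff_left outer_diff_right
  outer_scale_left outer_scale_right

theorem lemma2p9:
  fixes p \<gamma> e :: real and v m :: "real^2" and \<sigma> :: "real^2^2"
  assumes "\<gamma> > 0"
    and "(v, m, \<sigma>, e) \<in> Zset"
    and "m \<noteq> (e + p) *\<^sub>R v"
    and "2 * e - (norm v)^2 > 0"
    and "Mmat p (v, m, \<sigma>, e) = 0"
    and "e < \<gamma>"
    and "norm ((((2 * \<gamma> - (norm v)^2) / ((\<gamma> - e) * (2 * e - (norm v)^2))) *\<^sub>R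
                (m - (e + p) *\<^sub>R v)) - v) \<le> sqrt (2 * \<gamma>)"
  shows "(v, m, \<sigma>, e) \<in> KLam1 p \<gamma>"
proof -
  define w where "w = m - (e + p) *\<^sub>R v"
  define W where "W = norm w"
  have wne: "w \<noteq> 0" using assms(3) by (simp add: w_def)
  have Wpos: "W > 0" using wne by (simp add: W_def)
  define \<eta> where "\<eta> = (1 / W) *\<^sub>R w"
  have eta_eq: "eta p (v, m, \<sigma>, e) = \<eta>" by (simp add: eta_def \<eta>_def W_def w_def)
  have w_eq: "w = W *\<^sub>R \<eta>" using Wpos by (simp add: \<eta>_def)
  have etan: "\<eta> \<bullet> \<eta> = 1"
    using Wpos by (simp add: \<eta>_def W_def power2_norm_eq_inner[symmetric] power2_eq_square)
  have etane: "\<eta> \<noteq> 0" using etan by auto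
  define vv where "vv = v \<bullet> v"
  have nv: "(norm v)^2 = vv" by (simp add: vv_def power2_norm_eq_inner)
  define D where "D = 2 * e - vv"
  have Dpos: "D > 0" using assms(4) nv D_def by simp
  have sig: "\<sigma> = outer v v - e *\<^sub>R mat 1 + D *\<^sub>R outer \<eta> \<eta>"
  proof -
    have "outer v v - \<sigma> - e *\<^sub>R mat 1 + D *\<^sub>R outer \<eta> \<eta> = 0"
      using assms(5) by (simp add: Mmat_def eta_eq D_def nv)
    then show ?thesis by (simp add: algebra_simps)
  qed
  have m_eq: "m = (e + p) *\<^sub>R v + W *\<^sub>R \<eta>" using w_eq by (simp add: w_def algebra_simps)
  define \<beta> where "\<beta> = \<eta> \<bullet> v"
  define \<delta> where "\<delta> = 2 * W / D - 2 * \<beta>"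
  define r where "r = sqrt (\<delta>^2 + 4 * D)"
  have r2: "r^2 = \<delta>^2 + 4 * D" using Dpos by (simp add: r_def)
  have rgt: "r > \<bar>\<delta>\<bar>"
  proof -
    have "sqrt (\<delta>^2) < r" unfolding r_def using Dpos by (intro real_sqrt_less_mono) simp
    then show ?thesis by simp
  qed
  define b where "b = (\<delta> + r) / 2"
  have bpos: "b > 0" using rgt by (simp add: b_def)
  have hb: "b^2 - \<delta> * b - D = 0"
    unfolding b_def using r2 by (simp add: power2_eq_square field_simps)
  define a where "a = D / b"
  have apos: "a > 0" using Dpos bpos by (simp add: a_def)
  have ab: "a * b = D" using bpos by (simp add: a_def)
  have bma: "b - a = \<delta>"
    using hb bpos by (simp add: a_def power2_eq_square field_simps)
  define t where "t = a + b"
  have tpos: "t > 0" using apos bpos by (simp add: t_def)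
  define s where "s = a / t"
  have s01: "s \<in> {0..1}" using apos bpos by (simp add: s_def t_def)
  have oms: "1 - s = b / t" using tpos by (simp add: s_def t_def field_simps)
  have F1: "s * b - (1 - s) * a = 0" using tpos by (simp add: oms s_def t_def field_simps)
  have F2: "s * b^2 + (1 - s) * a^2 = D"
  proof -
    have "s * b^2 + (1 - s) * a^2 = (a * b^2 + b * a^2) / t"
      by (subst oms) (simp add: s_def add_divide_distrib)
    also have "a * b^2 + b * a^2 = a * b * t" by (simp add: t_def power2_eq_square algebra_simps)
    finally show ?thesis using ab tpos by simp
  qed
  define v1 where "v1 = v + b *\<^sub>R \<eta>"
  define v2 where "v2 = v - a *\<^sub>R \<eta>"
  have vv1: "v1 \<bullet> v1 = vv + 2 * b * \<beta> + b^2"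
    by (simp add: v1_def vv_def \<beta>_def inner_add_left inner_add_right inner_commute etan
        power2_eq_square algebra_simps)
  have vv2: "v2 \<bullet> v2 = vv - 2 * a * \<beta> + a^2"
    by (simp add: v2_def vv_def \<beta>_def inner_diff_left inner_diff_right inner_commute etan
        power2_eq_square algebra_simps)
  define P where "P = 2 * \<gamma> - vv"
  have Ppos: "P > 0" using Dpos assms(6) by (simp add: P_def D_def)
  define B where "B = (\<gamma> - e) * D / W"
  have Bpos: "B > 0" using assms(6) Dpos Wpos by (simp add: B_def)
  define lm where "lm = P / B"
  have lam: "((2 * \<gamma> - (norm v)^2) / ((\<gamma> - e) * (2 * e - (norm v)^2))) *\<^sub>R w = lm *\<^sub>R \<eta>"
    using Wpos Dpos assms(6) by (simp add: w_eq nv lm_def P_def B_def D_def field_simps)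
  have "norm (lm *\<^sub>R \<eta> - v) \<le> sqrt (2 * \<gamma>)" using assms(7) lam by (simp add: w_def)
  then have "(norm (lm *\<^sub>R \<eta> - v))^2 \<le> (sqrt (2 * \<gamma>))^2" by (intro power_mono) auto
  also have "\<dots> = 2 * \<gamma>" using assms(1) by simp
  also have "(norm (lm *\<^sub>R \<eta> - v))^2 = lm^2 - 2 * lm * \<beta> + vv"
    unfolding power2_norm_eq_inner by (simp add: vv_def \<beta>_def inner_diff_left inner_diff_right inner_commute etan
        power2_eq_square algebra_simps)
  finally have h1: "lm^2 - 2 * lm * \<beta> \<le> P" by (simp add: P_def)
  have PlB: "P = lm * B" using Bpos by (simp add: lm_def)
  have lmpos: "lm > 0" using Ppos Bpos by (simp add: lm_def)
  have "lm * (lm - 2 * \<beta>) \<le> lm * B" using h1 PlB by (simp add: power2_eq_square algebra_simps)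
  then have "lm - 2 * \<beta> \<le> B" using lmpos by simp
  then have "B * (lm - 2 * \<beta>) \<le> B * B" using Bpos by simp
  then have gB: "P - 2 * \<beta> * B \<le> B^2" using PlB by (simp add: power2_eq_square algebra_simps)
  have hB: "B^2 - \<delta> * B - D \<ge> 0"
  proof -
    have "\<delta> * B = 2 * (\<gamma> - e) - 2 * \<beta> * B"
      using Wpos Dpos by (simp add: \<delta>_def B_def field_simps)
    then show ?thesis using gB by (simp add: P_def D_def)
  qed
  have "(B - b) * (B + a) = B^2 - \<delta> * B - D"
    using ab bma by (simp add: power2_eq_square algebra_simps)
  then have "(B - b) * (B + a) \<ge> 0" using hB by simp
  then have bB: "b \<le> B" using Bpos apos by (simp add: zero_le_mult_iff)
  have e1le: "v1 \<bullet> v1 / 2 \<le> \<gamma>"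
  proof -
    have "v1 \<bullet> v1 = 2 * e + 2 * b * W / D"
      using vv1 hb Dpos by (simp add: \<delta>_def D_def power2_eq_square field_simps)
    also have "\<dots> \<le> 2 * e + 2 * B * W / D"
      using bB Wpos Dpos by (simp add: divide_right_mono)
    also have "\<dots> = 2 * \<gamma>" using Wpos Dpos by (simp add: B_def)
    finally show ?thesis by simp
  qed
  have e2le: "v2 \<bullet> v2 / 2 \<le> \<gamma>"
  proof -
    have "a^2 - 2 * a * \<beta> - D = a * (a - 2 * \<beta> - b)"
      using ab by (simp add: power2_eq_square algebra_simps)
    also have "a - 2 * \<beta> - b = - (2 * W / D)" using bma by (simp add: \<delta>_def)
    also have "a * (- (2 * W / D)) = - 2 * a * W / D" by simp
    also have "\<dots> \<le> 0" using apos Wpos Dpos by simp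
    finally show ?thesis using vv2 assms(6) by (simp add: D_def)
  qed
  define E1 where "E1 = v1 \<bullet> v1 / 2"
  define E2 where "E2 = v2 \<bullet> v2 / 2"
  have cv: "s *\<^sub>R v1 + (1 - s) *\<^sub>R v2 = v"
  proof -
    have "s *\<^sub>R v1 + (1 - s) *\<^sub>R v2 = v + (s * b - (1 - s) * a) *\<^sub>R \<eta>"
      by (simp add: v1_def v2_def algebra_simps)
    then show ?thesis using F1 by simp
  qed
  have ceE: "s * E1 + (1 - s) * E2 = e"
  proof -
    have "s * E1 + (1 - s) * E2 = vv / 2 + \<beta> * (s * b - (1 - s) * a) + (s * b^2 + (1 - s) * a^2) / 2"
      by (simp add: E1_def E2_def vv1 vv2 field_simps)
    also have "\<dots> = vv / 2 + D / 2" using F1 F2 by simp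
    also have "\<dots> = e" by (simp add: D_def field_simps)
    finally show ?thesis .
  qed
  have ce: "s *\<^sub>R E1 + (1 - s) *\<^sub>R E2 = e" using ceE by simp
  have cm: "s *\<^sub>R ((E1 + p) *\<^sub>R v1) + (1 - s) *\<^sub>R ((E2 + p) *\<^sub>R v2) = m"
  proof -
    have "s *\<^sub>R ((E1 + p) *\<^sub>R v1) + (1 - s) *\<^sub>R ((E2 + p) *\<^sub>R v2) =
        (s * E1 + (1 - s) * E2 + p) *\<^sub>R v + (s * (E1 + p) * b - (1 - s) * (E2 + p) * a) *\<^sub>R \<eta>"
      by (simp add: v1_def v2_def algebra_simps)
    also have "s * (E1 + p) * b - (1 - s) * (E2 + p) * a = W"
    proof -
      have F1': "(1 - s) * a = s * b" using F1 by simp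
      have "s * (E1 + p) * b - (1 - s) * (E2 + p) * a = s * b * E1 - ((1 - s) * a) * E2 + p * (s * b - (1 - s) * a)"
        by (simp add: algebra_simps)
      also have "\<dots> = s * b * (E1 - E2)" unfolding F1' by (simp add: algebra_simps)
      also have "E1 - E2 = t * (2 * \<beta> + (b - a)) / 2"
        by (simp add: E1_def E2_def vv1 vv2 t_def power2_eq_square field_simps)
      also have "s * b * (t * (2 * \<beta> + (b - a)) / 2) = (s * t) * b * (2 * \<beta> + \<delta>) / 2"
        unfolding bma by simp
      also have "s * t = a" using tpos by (simp add: s_def)
      also have "a * b * (2 * \<beta> + \<delta>) / 2 = W"
        using ab Dpos by (simp add: \<delta>_def)
      finally show ?thesis .
    qed
    finally show ?thesis using ceE m_eq by simp
  qed
  have o1: "outer v1 v1 = outer v v + b *\<^sub>R (outer v \<eta> + outer \<eta> v) + b^2 *\<^sub>R outer \<eta> \<eta>"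
    by (simp add: v1_def outer_simps power2_eq_square algebra_simps)
  have o2: "outer v2 v2 = outer v v - a *\<^sub>R (outer v \<eta> + outer \<eta> v) + a^2 *\<^sub>R outer \<eta> \<eta>"
    by (simp add: v2_def outer_simps power2_eq_square algebra_simps)
  have cs: "s *\<^sub>R (outer v1 v1 - E1 *\<^sub>R mat 1) + (1 - s) *\<^sub>R (outer v2 v2 - E2 *\<^sub>R mat 1) = \<sigma>"
  proof -
    have "s *\<^sub>R (outer v1 v1 - E1 *\<^sub>R mat 1) + (1 - s) *\<^sub>R (outer v2 v2 - E2 *\<^sub>R mat 1)
      = outer v v + (s * b - (1 - s) * a) *\<^sub>R (outer v \<eta> + outer \<eta> v)
        + (s * b^2 + (1 - s) * a^2) *\<^sub>R outer \<eta> \<eta> - (s * E1 + (1 - s) * E2) *\<^sub>R mat 1"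
      unfolding o1 o2 by (simp add: algebra_simps)
    then show ?thesis using F1 F2 ceE sig by simp
  qed
  have zeq: "(v, m, \<sigma>, e) = s *\<^sub>R kpt p v1 + (1 - s) *\<^sub>R kpt p v2"
    unfolding kpt_def scaleR_Pair add_Pair prod.inject E1_def[symmetric] E2_def[symmetric]
    by (intro conjI, simp_all only: cv ce cm cs)
  have K1: "kpt p v1 \<in> Kgam p \<gamma>" using e1le by (rule kpt_in)
  have K2: "kpt p v2 \<in> Kgam p \<gamma>" using e2le by (rule kpt_in)
  have "v1 - v2 = t *\<^sub>R \<eta>" by (simp add: v1_def v2_def t_def algebra_simps)
  then have wc: "kpt p v1 - kpt p v2 \<in> wave_cone" using etane tpos by (intro kpt_wave) auto
  show ?thesis unfolding KLam1_def using zeq K1 K2 wc s01 by blast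
qed

end
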